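(* Let $\mathbf A$ be an integral interior $r\ell u$-groupoid and $\mathbf B$ a finite partial subalgebra of $\mathbf A$. Then the algebra $\mathbf F^+_{\mathbf A,\mathbf B}$ is finite.
   Context: An $r\ell u$-groupoid is an algebra $(A,\wedge,\vee,\cdot,\backslash,/,1)$ with $(A,\wedge,\vee)$ a lattice (order $\le$), $(A,\cdot,1)$ a unital groupoid (binary operation, not necessarily associative, with two-sided unit $1$), and $x\cdot y\le z\iff y\le x\backslash z\iff x\le z/y$. An interior $r\ell u$-groupoid has in addition a unary $!$ with $1\le !1$, $!x\cdot!y\le !(x\cdot y)$, $!x\le x$, $!x\le !!x$, $x\le y\Rightarrow !x\le !y$; integral means $x\le 1$ for all $x$. A partial subalgebra $\mathbf B$ of $\mathbf A$ is a subset $B\subseteq A$ with $f^{\mathbf B}(\vec b)=f^{\mathbf A}(\vec b)$ if this lies in $B$, undefined otherwise. Enriched frames. An enriched $ru$-frame is $\mathbf F=(G,T,N,K)$ where $(G,\cdot,\varepsilon)$ is a unital groupoid, $T$ a set, $N\subseteq G\times T$ a nuclear relation (for all $x,y\in G$, $z\in T$ there exist $x\backslash\!\!\backslash z,\ z/\!\!/y\in T$ with $x\cdot y\,N\,z\iff y\,N\,x\backslash\!\!\backslash z\iff x\,N\,z/\!\!/y$), and $K$ a sub-unital-groupoid of $G$. For $X\subseteq G$, $Y\subseteq T$: $X^{\rhd}=\{t\in T\mid \forall x\in X\,(x N t)\}$, $Y^{\lhd}=\{g\in G\mid\forall y\in Y\,(g N y)\}$, $\gamma_N(X)=X^{\rhd\lhd}$;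 $X$ is closed if $\gamma_N(X)=X$. $\mathbf F^+$ is the algebra whose universe is the set of closed sets, with $X\wedge Y=X\cap Y$, $X\vee Y=\gamma_N(X\cup Y)$, $X\cdot Y=\gamma_N(X\circ Y)$ where $X\circ Y=\{x\cdot y\mid x\in X,y\in Y\}$, $X\backslash Y=\{z\in G\mid X\circ\{z\}\subseteq Y\}$, $Y/X=\{z\in G\mid \{z\}\circ X\subseteq Y\}$, $!X=\gamma_N(X\cap K)$, unit $\gamma_N(\{\varepsilon\})$. The frame $\mathbf F_{\mathbf A,\mathbf B}=(G_B,T_B,N_B,K_B)$: $G_B$ is the sub-unital-groupoid of $(A,\cdot,1)$ generated by $B$; $U_{G_B}$ is the set of unary linear polynomials over $G_B$, i.e. maps $G_B\to G_B$ given by a groupoid term in which one variable occurs exactly once and all other leaves are elements of $G_B$ (including the identity map $\mathrm{id}$); $T_B=U_{G_B}\times B$; $x\,N_B\,(u,b)$ iff $u(x)\le^{\mathbf A}b$; $K_B$ is the sub-unital-groupoid of $(A,\cdot,1)$ generated by $\{!^{\mathbf A}b\mid b\in B,\ !^{\mathbf A}b\in B\}$. ($N_B$ is nuclear with $x\backslash\!\!\backslash(u,b)=(u(x\cdot\_),b)$ and $(u,b)/\!\!/y=(u(\_\cdot y),b)$.) *)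

theory Defs
  imports Main
begin

section \<open>r-l-u-groupoids (universe = the whole type 'a)\<close>

record 'a rlu_groupoid =
  meet :: "'a \<Rightarrow> 'a \<Rightarrow> 'a"
  join :: "'a \<Rightarrow> 'a \<Rightarrow> 'a"
  mult :: "'a \<Rightarrow> 'a \<Rightarrow> 'a"
  ldiv :: "'a \<Rightarrow> 'a \<Rightarrow> 'a"   (* ldiv x z  =  x \ z *)
  rdiv :: "'a \<Rightarrow> 'a \<Rightarrow> 'a"   (* rdiv z y  =  z / y *)
  one  :: 'a
  bang :: "'a \<Rightarrow> 'a"

definition leq :: "('a, 'b) rlu_groupoid_scheme \<Rightarrow> 'a \<Rightarrow> 'a \<Rightarrow> bool" where
  "leq A x y \<longleftrightarrow> meet A x y = x"

definition is_lattice :: "('a, 'b) rlu_groupoid_scheme \<Rightarrow> bool" where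
  "is_lattice A \<longleftrightarrow>
     (\<forall>x y z. meet A (meet A x y) z = meet A x (meet A y z)) \<and>
     (\<forall>x y z. join A (join A x y) z = join A x (join A y z)) \<and>
     (\<forall>x y. meet A x y = meet A y x) \<and>
     (\<forall>x y. join A x y = join A y x) \<and>
     (\<forall>x. meet A x x = x) \<and> (\<forall>x. join A x x = x) \<and>
     (\<forall>x y. meet A x (join A x y) = x) \<and>
     (\<forall>x y. join A x (meet A x y) = x)"

definition is_rlu_groupoid :: "('a, 'b) rlu_groupoid_scheme \<Rightarrow> bool" where
  "is_rlu_groupoid A \<longleftrightarrow>
     is_lattice A \<and>
     (\<forall>x. mult A (one A) x = x \<and> mult A x (one A) = x) \<and>
     (\<forall>x y z. (leq A (mult A x y) z \<longleftrightarrow> leq A y (ldiv A x z)) \<and>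
              (leq A (mult A x y) z \<longleftrightarrow> leq A x (rdiv A z y)))"

definition is_interior_rlu_groupoid :: "('a, 'b) rlu_groupoid_scheme \<Rightarrow> bool" where
  "is_interior_rlu_groupoid A \<longleftrightarrow>
     is_rlu_groupoid A \<and>
     leq A (one A) (bang A (one A)) \<and>
     (\<forall>x y. leq A (mult A (bang A x) (bang A y)) (bang A (mult A x y))) \<and>
     (\<forall>x. leq A (bang A x) x) \<and>
     (\<forall>x. leq A (bang A x) (bang A (bang A x))) \<and>
     (\<forall>x y. leq A x y \<longrightarrow> leq A (bang A x) (bang A y))"

definition is_integral :: "('a, 'b) rlu_groupoid_scheme \<Rightarrow> bool" where
  "is_integral A \<longleftrightarrow> (\<forall>x. leq A x (one A))"

text \<open>A partial subalgebra is determined by its underlying subset: the operations are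
  the restrictions of those of A (defined exactly when the value lies in B).\<close>
definition is_partial_subalgebra :: "('a, 'b) rlu_groupoid_scheme \<Rightarrow> 'a set \<Rightarrow> bool" where
  "is_partial_subalgebra A B \<longleftrightarrow> B \<subseteq> UNIV"

record ('g, 't) enriched_frame =
  fG :: "'g set"
  fmult :: "'g \<Rightarrow> 'g \<Rightarrow> 'g"
  feps :: 'g
  fT :: "'t set"
  fN :: "'g \<Rightarrow> 't \<Rightarrow> bool"
  fK :: "'g set"

definition rpolar :: "('g, 't) enriched_frame \<Rightarrow> 'g set \<Rightarrow> 't set" where
  "rpolar F X = {t \<in> fT F. \<forall>x\<in>X. fN F x t}"

definition lpolar :: "('g, 't) enriched_frame \<Rightarrow> 't set \<Rightarrow> 'g set" where
  "lpolar F Y = {g \<in> fG F. \<forall>y\<in>Y. fN F g y}"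

definition gammaN :: "('g, 't) enriched_frame \<Rightarrow> 'g set \<Rightarrow> 'g set" where
  "gammaN F X = lpolar F (rpolar F X)"

definition cplx :: "('g, 't) enriched_frame \<Rightarrow> 'g set \<Rightarrow> 'g set \<Rightarrow> 'g set" where
  "cplx F X Y = {fmult F x y | x y. x \<in> X \<and> y \<in> Y}"

record 'g complex_algebra =
  ca_carrier :: "'g set set"
  ca_meet :: "'g set \<Rightarrow> 'g set \<Rightarrow> 'g set"
  ca_join :: "'g set \<Rightarrow> 'g set \<Rightarrow> 'g set"
  ca_mult :: "'g set \<Rightarrow> 'g set \<Rightarrow> 'g set"
  ca_ldiv :: "'g set \<Rightarrow> 'g set \<Rightarrow> 'g set"
  ca_rdiv :: "'g set \<Rightarrow> 'g set \<Rightarrow> 'g set"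
  ca_one :: "'g set"
  ca_bang :: "'g set \<Rightarrow> 'g set"

definition Fplus :: "('g, 't) enriched_frame \<Rightarrow> 'g complex_algebra" where
  "Fplus F = \<lparr>
     ca_carrier = {X. X \<subseteq> fG F \<and> gammaN F X = X},
     ca_meet = (\<lambda>X Y. X \<inter> Y),
     ca_join = (\<lambda>X Y. gammaN F (X \<union> Y)),
     ca_mult = (\<lambda>X Y. gammaN F (cplx F X Y)),
     ca_ldiv = (\<lambda>X Y. {z \<in> fG F. cplx F X {z} \<subseteq> Y}),
     ca_rdiv = (\<lambda>Y X. {z \<in> fG F. cplx F {z} X \<subseteq> Y}),
     ca_one = gammaN F {feps F},
     ca_bang = (\<lambda>X. gammaN F (X \<inter> fK F)) \<rparr>"

inductive_set subgroupoid_gen :: "('a, 'b) rlu_groupoid_scheme \<Rightarrow> 'a set \<Rightarrow> 'a set"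
  for A :: "('a, 'b) rlu_groupoid_scheme" and S :: "'a set" where
  gen_base: "x \<in> S \<Longrightarrow> x \<in> subgroupoid_gen A S"
| gen_one: "one A \<in> subgroupoid_gen A S"
| gen_mult: "x \<in> subgroupoid_gen A S \<Longrightarrow> y \<in> subgroupoid_gen A S
      \<Longrightarrow> mult A x y \<in> subgroupoid_gen A S"

datatype 'a gterm = Var | Const 'a | Mul "'a gterm" "'a gterm"

fun var_count :: "'a gterm \<Rightarrow> nat" where
  "var_count Var = 1"
| "var_count (Const c) = 0"
| "var_count (Mul s t) = var_count s + var_count t"

fun consts_of :: "'a gterm \<Rightarrow> 'a set" where
  "consts_of Var = {}"
| "consts_of (Const c) = {c}"
| "consts_of (Mul s t) = consts_of s \<union> consts_of t"

fun geval :: "('a, 'b) rlu_groupoid_scheme \<Rightarrow> 'a gterm \<Rightarrow> 'a \<Rightarrow> 'a" where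
  "geval A Var x = x"
| "geval A (Const c) x = c"
| "geval A (Mul s t) x = mult A (geval A s x) (geval A t x)"

definition lin_polys :: "('a, 'b) rlu_groupoid_scheme \<Rightarrow> 'a set \<Rightarrow> ('a \<Rightarrow> 'a) set" where
  "lin_polys A G = {(\<lambda>x. if x \<in> G then geval A t x else undefined) | t.
                      var_count t = 1 \<and> consts_of t \<subseteq> G}"

definition frame_AB :: "('a, 'b) rlu_groupoid_scheme \<Rightarrow> 'a set
                           \<Rightarrow> ('a, ('a \<Rightarrow> 'a) \<times> 'a) enriched_frame" where
  "frame_AB A B = \<lparr>
     fG = subgroupoid_gen A B,
     fmult = mult A,
     feps = one A,
     fT = lin_polys A (subgroupoid_gen A B) \<times> B,
     fN = (\<lambda>x (u, b). leq A (u x) b),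
     fK = subgroupoid_gen A {bang A b | b. b \<in> B \<and> bang A b \<in> B} \<rparr>"

end

theory Submission
  imports Defs "HOL-Library.Ramsey"
begin


definition good :: "('a \<Rightarrow> 'a \<Rightarrow> bool) \<Rightarrow> (nat \<Rightarrow> 'a) \<Rightarrow> bool" where
  "good Q f \<longleftrightarrow> (\<exists>i j. i < j \<and> Q (f i) (f j))"

definition wqs :: "('a \<Rightarrow> 'a \<Rightarrow> bool) \<Rightarrow> (nat \<Rightarrow> 'a) \<Rightarrow> bool" where
  "wqs Q f \<longleftrightarrow> (\<forall>\<phi>. strict_mono \<phi> \<longrightarrow> good Q (f \<circ> \<phi>))"

lemma sm_comp: "strict_mono (\<phi>::nat\<Rightarrow>nat) \<Longrightarrow> strict_mono \<psi> \<Longrightarrow> strict_mono (\<phi> \<circ> \<psi>)"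
  by (simp add: strict_mono_def)

lemma sm_ge: "strict_mono (\<phi>::nat\<Rightarrow>nat) \<Longrightarrow> n \<le> \<phi> n"
  by (induction n) (auto simp: strict_mono_def Suc_le_eq dest: spec[of _ n] order.strict_trans1)

lemma wqs_comp: "wqs Q f \<Longrightarrow> strict_mono \<psi> \<Longrightarrow> wqs Q (f \<circ> \<psi>)"
  unfolding wqs_def by (metis comp_assoc sm_comp)

lemma asc:
  assumes "wqs Q f"
  shows "\<exists>\<phi>::nat\<Rightarrow>nat. strict_mono \<phi> \<and> (\<forall>i j. i < j \<longrightarrow> Q (f (\<phi> i)) (f (\<phi> j)))"
proof -
  define c where "c = (\<lambda>X::nat set. if Q (f (Min X)) (f (Max X)) then 0 else (1::nat))"
  have "\<forall>x\<in>UNIV. \<forall>y\<in>UNIV. x \<noteq> y \<longrightarrow> c {x, y} < 2" by (simp add: c_def)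
  from Ramsey2[OF _ this] obtain Y t where Y: "infinite Y" "t < 2"
    "\<forall>x\<in>Y. \<forall>y\<in>Y. x \<noteq> y \<longrightarrow> c {x, y} = t" by auto
  define \<phi> where "\<phi> = enumerate Y"
  have sm: "strict_mono \<phi>" using Y(1) by (simp add: \<phi>_def strict_mono_enumerate)
  have inY: "\<phi> i \<in> Y" for i using Y(1) by (simp add: \<phi>_def enumerate_in_set)
  have col: "c {\<phi> i, \<phi> j} = t" if "i < j" for i j
    using Y(3) inY sm that by (metis less_not_refl strict_mono_def)
  have cc: "c {\<phi> i, \<phi> j} = (if Q (f (\<phi> i)) (f (\<phi> j)) then 0 else 1)" if "i < j" for i j
  proof -
    have "\<phi> i < \<phi> j" using sm that by (simp add: strict_mono_def)
    then show ?thesis by (simp add: c_def min_def max_def)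
  qed
  show ?thesis
  proof (cases "t = 0")
    case True
    then show ?thesis using sm col cc by (metis zero_neq_one)
  next
    case False
    then have "\<not> good Q (f \<circ> \<phi>)" using col cc unfolding good_def by (metis comp_apply)
    then show ?thesis using assms sm unfolding wqs_def by blast
  qed
qed

lemma inf_enum: "infinite (S::nat set) \<Longrightarrow> \<exists>\<phi>::nat\<Rightarrow>nat. strict_mono \<phi> \<and> (\<forall>i. \<phi> i \<in> S)"
  using strict_mono_enumerate enumerate_in_set by blast

lemma pigeon_bool:
  fixes g :: "nat \<Rightarrow> bool"
  shows "\<exists>(\<phi>::nat\<Rightarrow>nat) v. strict_mono \<phi> \<and> (\<forall>i. g (\<phi> i) = v)"
proof -
  have "infinite {n. g n} \<or> infinite {n. \<not> g n}"
  proof (rule ccontr)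
    assume "\<not> ?thesis"
    then have "finite ({n. g n} \<union> {n. \<not> g n})" by auto
    moreover have "{n. g n} \<union> {n. \<not> g n} = UNIV" by auto
    ultimately show False by simp
  qed
  then show ?thesis
  proof
    assume a: "infinite {n. g n}"
    then obtain \<phi>::"nat\<Rightarrow>nat" where "strict_mono \<phi>" "\<forall>i. \<phi> i \<in> {n. g n}" using inf_enum by blast
    then show ?thesis by (intro exI[of _ \<phi>] exI[of _ True]) auto
  next
    assume a: "infinite {n. \<not> g n}"
    then obtain \<phi>::"nat\<Rightarrow>nat" where "strict_mono \<phi>" "\<forall>i. \<phi> i \<in> {n. \<not> g n}" using inf_enum by blast
    then show ?thesis by (intro exI[of _ \<phi>] exI[of _ False]) auto
  qed
qed

definition Pext :: "'a set \<Rightarrow> ('a \<Rightarrow> 'a \<Rightarrow> bool) \<Rightarrow> 'a list \<Rightarrow> bool" where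
  "Pext D Q xs \<longleftrightarrow> (\<exists>g. (\<forall>i. g i \<in> D) \<and> \<not> good Q g \<and> (\<forall>i<length xs. g i = xs ! i))"

definition chs :: "'a set \<Rightarrow> ('a \<Rightarrow> 'a \<Rightarrow> bool) \<Rightarrow> ('a \<Rightarrow> nat) \<Rightarrow> 'a list \<Rightarrow> 'a" where
  "chs D Q sz xs = (SOME x. Pext D Q (xs @ [x]) \<and> (\<forall>y. Pext D Q (xs @ [y]) \<longrightarrow> sz x \<le> sz y))"

fun pre :: "'a set \<Rightarrow> ('a \<Rightarrow> 'a \<Rightarrow> bool) \<Rightarrow> ('a \<Rightarrow> nat) \<Rightarrow> nat \<Rightarrow> 'a list" where
  "pre D Q sz 0 = []"
| "pre D Q sz (Suc n) = pre D Q sz n @ [chs D Q sz (pre D Q sz n)]"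

lemma chs_spec:
  assumes "Pext D Q xs"
  shows "Pext D Q (xs @ [chs D Q sz xs]) \<and> (\<forall>y. Pext D Q (xs @ [y]) \<longrightarrow> sz (chs D Q sz xs) \<le> sz y)"
proof -
  from assms obtain g where g: "\<forall>i. g i \<in> D" "\<not> good Q g" "\<forall>i<length xs. g i = xs ! i"
    unfolding Pext_def by blast
  have "Pext D Q (xs @ [g (length xs)])"
    unfolding Pext_def using g by (intro exI[of _ g]) (auto simp: nth_append less_Suc_eq)
  then have "\<exists>x. Pext D Q (xs @ [x]) \<and> (\<forall>y. Pext D Q (xs @ [y]) \<longrightarrow> sz x \<le> sz y)"
    using ex_has_least_nat[of "\<lambda>x. Pext D Q (xs @ [x])" _ sz] by blast
  then show ?thesis unfolding chs_def by (rule someI_ex)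
qed

lemma pre_len: "length (pre D Q sz n) = n"
  by (induction n) auto

lemma pre_P: "Pext D Q [] \<Longrightarrow> Pext D Q (pre D Q sz n)"
  by (induction n) (auto simp: chs_spec)

lemma pre_nth: "i < n \<Longrightarrow> pre D Q sz n ! i = pre D Q sz (Suc i) ! i"
proof (induction n)
  case 0 then show ?case by simp
next
  case (Suc n)
  then show ?case by (cases "i < n") (auto simp: nth_append pre_len less_Suc_eq)
qed

lemma mbs:
  fixes sz :: "'a \<Rightarrow> nat"
  assumes "\<forall>i. f i \<in> D" "\<not> good Q f"
  shows "\<exists>m. (\<forall>i. m i \<in> D) \<and> \<not> good Q m \<and>
    (\<forall>n g. (\<forall>i. g i \<in> D) \<and> (\<forall>i<n. g i = m i) \<and> sz (g n) < sz (m n) \<longrightarrow> good Q g)"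
proof -
  have P0: "Pext D Q []" using assms unfolding Pext_def by auto
  define m where "m i = pre D Q sz (Suc i) ! i" for i
  have agree: "\<forall>i<n. pre D Q sz n ! i = m i" for n using pre_nth m_def by metis
  have Pn: "Pext D Q (pre D Q sz n)" for n using pre_P[OF P0] .
  have inD: "\<forall>i. m i \<in> D"
  proof
    fix i
    obtain g where "\<forall>i. g i \<in> D" "\<forall>k<Suc i. g k = pre D Q sz (Suc i) ! k"
      using Pn[of "Suc i"] unfolding Pext_def pre_len by blast
    then show "m i \<in> D" using m_def by (metis lessI)
  qed
  have bad: "\<not> good Q m"
  proof
    assume "good Q m"
    then obtain i j where ij: "i < j" "Q (m i) (m j)" unfolding good_def by blast
    obtain g where g: "\<not> good Q g" "\<forall>k<Suc j. g k = pre D Q sz (Suc j) ! k"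
      using Pn[of "Suc j"] unfolding Pext_def pre_len by blast
    have "g i = m i" "g j = m j" using g(2) agree[of "Suc j"] ij(1) by auto
    then have "Q (g i) (g j)" using ij by simp
    then show False using g(1) ij(1) unfolding good_def by blast
  qed
  have minl: "good Q g" if g: "\<forall>i. g i \<in> D" "\<forall>i<n. g i = m i" "sz (g n) < sz (m n)" for n g
  proof (rule ccontr)
    assume ng: "\<not> good Q g"
    have "Pext D Q (pre D Q sz n @ [g n])"
      unfolding Pext_def using g ng agree[of n]
      by (intro exI[of _ g]) (auto simp: nth_append pre_len less_Suc_eq)
    then have "sz (chs D Q sz (pre D Q sz n)) \<le> sz (g n)" using chs_spec[OF Pn[of n]] by blast
    moreover have "m n = chs D Q sz (pre D Q sz n)" by (simp add: m_def nth_append pre_len)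
    ultimately show False using g(3) by simp
  qed
  show ?thesis using inD bad minl by blast
qed



lemma mbs_sub:
  fixes sz :: "'a \<Rightarrow> nat"
  assumes mD: "\<forall>i. m i \<in> D" and mbad: "\<not> good Q m"
    and mmin: "\<forall>n g. (\<forall>i. g i \<in> D) \<and> (\<forall>i<n. g i = m i) \<and> sz (g n) < sz (m n) \<longrightarrow> good Q g"
    and h: "\<forall>n\<ge>N. h n \<in> D \<and> sz (h n) < sz (m n) \<and> (\<forall>x\<in>D. Q x (h n) \<longrightarrow> Q x (m n))"
  shows "wqs Q (\<lambda>n. h (N + n))"
  unfolding wqs_def
proof (intro allI impI)
  fix \<phi> :: "nat \<Rightarrow> nat" assume sm: "strict_mono \<phi>"
  show "good Q ((\<lambda>n. h (N + n)) \<circ> \<phi>)"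
  proof (rule ccontr)
    assume nb: "\<not> good Q ((\<lambda>n. h (N + n)) \<circ> \<phi>)"
    define n0 where "n0 = N + \<phi> 0"
    define g where "g i = (if i < n0 then m i else h (N + \<phi> (i - n0)))" for i
    have gD: "\<forall>i. g i \<in> D" using mD h by (simp add: g_def)
    have ag: "\<forall>i<n0. g i = m i" by (simp add: g_def)
    have "sz (g n0) < sz (m n0)" using h by (simp add: g_def n0_def)
    then have "good Q g" using mmin gD ag by blast
    then obtain i j where ij: "i < j" "Q (g i) (g j)" unfolding good_def by blast
    show False
    proof (cases "j < n0")
      case True
      then show ?thesis using ij mbad unfolding good_def g_def by auto
    next
      case jn: False
      show ?thesis
      proof (cases "i < n0")
        case True
        have mono: "\<phi> 0 \<le> \<phi> (j - n0)" using sm by (simp add: strict_mono_less_eq)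
        have "Q (m i) (h (N + \<phi> (j - n0)))" using ij True jn by (simp add: g_def)
        then have "Q (m i) (m (N + \<phi> (j - n0)))" using h mD by auto
        moreover have "i < N + \<phi> (j - n0)" using True mono n0_def by simp
        ultimately show ?thesis using mbad unfolding good_def by blast
      next
        case False
        have "Q (((\<lambda>n. h (N + n)) \<circ> \<phi>) (i - n0)) (((\<lambda>n. h (N + n)) \<circ> \<phi>) (j - n0))"
          using ij False jn by (simp add: g_def)
        moreover have "i - n0 < j - n0" using ij False by simp
        ultimately show ?thesis using nb unfolding good_def by blast
      qed
    qed
  qed
qed

lemma bad_inj: "\<not> good Q m \<Longrightarrow> (\<And>x. Q x x) \<Longrightarrow> inj m"
  unfolding good_def inj_def by (metis linorder_neqE_nat)

lemma fin_base:
  assumes "inj (m::nat \<Rightarrow> 'a)" "finite Bs"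
  shows "\<exists>N. \<forall>n\<ge>N. m n \<notin> Bs"
proof -
  have "finite (m -` Bs)" using assms by (simp add: finite_vimageI)
  then obtain N where "\<forall>n\<in>m -` Bs. n < N" using finite_nat_set_iff_bounded by blast
  then show ?thesis by (metis leD vimageI)
qed

fun Gl :: "('a, 'b) rlu_groupoid_scheme \<Rightarrow> 'a set \<Rightarrow> nat \<Rightarrow> 'a set" where
  "Gl A B 0 = insert (one A) B"
| "Gl A B (Suc n) = Gl A B n \<union> {mult A x y | x y. x \<in> Gl A B n \<and> y \<in> Gl A B n}"

fun Dl :: "('a, 'b) rlu_groupoid_scheme \<Rightarrow> 'a set \<Rightarrow> nat \<Rightarrow> 'a set" where
  "Dl A B 0 = B"
| "Dl A B (Suc n) = Dl A B n \<union> {ldiv A c z | c z. c \<in> subgroupoid_gen A B \<and> z \<in> Dl A B n}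
      \<union> {rdiv A z c | c z. c \<in> subgroupoid_gen A B \<and> z \<in> Dl A B n}"

lemma Gl_mono: "m \<le> n \<Longrightarrow> Gl A B m \<subseteq> Gl A B n"
  by (induction n) (auto simp: le_Suc_eq)

lemma Dl_mono: "m \<le> n \<Longrightarrow> Dl A B m \<subseteq> Dl A B n"
  by (induction n) (auto simp: le_Suc_eq)

lemma G_eq: "subgroupoid_gen A B = (\<Union>n. Gl A B n)"
proof
  show "subgroupoid_gen A B \<subseteq> (\<Union>n. Gl A B n)"
  proof
    fix x assume "x \<in> subgroupoid_gen A B"
    then show "x \<in> (\<Union>n. Gl A B n)"
    proof induction
      case (gen_base x) then show ?case by (auto intro: exI[of _ 0])
    next
      case gen_one then show ?case by (auto intro: exI[of _ 0])
    next
      case (gen_mult x y)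
      then obtain i j where "x \<in> Gl A B i" "y \<in> Gl A B j" by auto
      then have "x \<in> Gl A B (max i j)" "y \<in> Gl A B (max i j)"
        using Gl_mono[of i "max i j" A B] Gl_mono[of j "max i j" A B] by auto
      then have "mult A x y \<in> Gl A B (Suc (max i j))" by auto
      then show ?case by blast
    qed
  qed
next
  show "(\<Union>n. Gl A B n) \<subseteq> subgroupoid_gen A B"
  proof -
    have "Gl A B n \<subseteq> subgroupoid_gen A B" for n
    proof (induction n)
      case 0 then show ?case using subgroupoid_gen.gen_base subgroupoid_gen.gen_one by auto
    next
      case (Suc n)
      have m: "mult A x y \<in> subgroupoid_gen A B" if "x \<in> Gl A B n" "y \<in> Gl A B n" for x y
        using that Suc subgroupoid_gen.gen_mult[of x A B y] by blast
      show ?case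
      proof
        fix w assume "w \<in> Gl A B (Suc n)"
        then have "w \<in> Gl A B n \<or> (\<exists>x y. w = mult A x y \<and> x \<in> Gl A B n \<and> y \<in> Gl A B n)" by auto
        then show "w \<in> subgroupoid_gen A B" using Suc m by blast
      qed
    qed
    then show ?thesis by blast
  qed
qed

definition D2 :: "('a, 'b) rlu_groupoid_scheme \<Rightarrow> 'a set \<Rightarrow> 'a set" where
  "D2 A B = (\<Union>n. Dl A B n)"

definition gsz :: "('a, 'b) rlu_groupoid_scheme \<Rightarrow> 'a set \<Rightarrow> 'a \<Rightarrow> nat" where
  "gsz A B x = (LEAST n. x \<in> Gl A B n)"

definition dsz :: "('a, 'b) rlu_groupoid_scheme \<Rightarrow> 'a set \<Rightarrow> 'a \<Rightarrow> nat" where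
  "dsz A B x = (LEAST n. x \<in> Dl A B n)"

lemma G_decomp:
  assumes "x \<in> subgroupoid_gen A B"
  shows "x \<in> insert (one A) B \<or> (\<exists>s t. x = mult A s t \<and> s \<in> subgroupoid_gen A B \<and> t \<in> subgroupoid_gen A B
            \<and> gsz A B s < gsz A B x \<and> gsz A B t < gsz A B x)"
proof -
  have "x \<in> (\<Union>n. Gl A B n)" using assms by (simp only: G_eq)
  then obtain k where k: "x \<in> Gl A B k" by blast
  define n where "n = gsz A B x"
  have xn: "x \<in> Gl A B n" unfolding n_def gsz_def using k by (rule LeastI)
  show ?thesis
  proof (cases n)
    case 0 then show ?thesis using xn by auto
  next
    case (Suc p)
    have "x \<notin> Gl A B p"
    proof
      assume "x \<in> Gl A B p" then have "gsz A B x \<le> p" unfolding gsz_def by (rule Least_le)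
      then show False using Suc n_def by simp
    qed
    then obtain s t where st: "x = mult A s t" "s \<in> Gl A B p" "t \<in> Gl A B p" using xn Suc by auto
    have "gsz A B s \<le> p" unfolding gsz_def using st(2) by (rule Least_le)
    moreover have "gsz A B t \<le> p" unfolding gsz_def using st(3) by (rule Least_le)
    ultimately have lt: "gsz A B s < gsz A B x" "gsz A B t < gsz A B x" using Suc n_def by linarith+
    have sG: "s \<in> subgroupoid_gen A B" "t \<in> subgroupoid_gen A B" unfolding G_eq using st(2,3) by blast+
    show ?thesis
      apply (rule disjI2)
      apply (rule exI[of _ s], rule exI[of _ t])
      by (intro conjI st(1) sG lt)
  qed
qed

lemma D_decomp:
  assumes "x \<in> D2 A B"
  shows "x \<in> B \<or> (\<exists>c z k. c \<in> subgroupoid_gen A B \<and> z \<in> D2 A B \<and> dsz A B z < dsz A B x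
            \<and> x = (if k then ldiv A c z else rdiv A z c))"
proof -
  from assms obtain k where k: "x \<in> Dl A B k" unfolding D2_def by auto
  define n where "n = dsz A B x"
  have xn: "x \<in> Dl A B n" unfolding n_def dsz_def using k by (rule LeastI)
  show ?thesis
  proof (cases n)
    case 0 then show ?thesis using xn by auto
  next
    case (Suc p)
    have "x \<notin> Dl A B p"
    proof
      assume "x \<in> Dl A B p" then have "dsz A B x \<le> p" unfolding dsz_def by (rule Least_le)
      then show False using Suc n_def by simp
    qed
    then have "x \<in> {ldiv A c z | c z. c \<in> subgroupoid_gen A B \<and> z \<in> Dl A B p}
      \<union> {rdiv A z c | c z. c \<in> subgroupoid_gen A B \<and> z \<in> Dl A B p}" using xn Suc by simp
    then obtain c z k where st: "x = (if k then ldiv A c z else rdiv A z c)" "c \<in> subgroupoid_gen A B" "z \<in> Dl A B p"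
    proof (elim UnE)
      assume "x \<in> {ldiv A c z | c z. c \<in> subgroupoid_gen A B \<and> z \<in> Dl A B p}"
      then obtain c z where "x = ldiv A c z" "c \<in> subgroupoid_gen A B" "z \<in> Dl A B p" by blast
      then show thesis using that[of True c z] by simp
    next
      assume "x \<in> {rdiv A z c | c z. c \<in> subgroupoid_gen A B \<and> z \<in> Dl A B p}"
      then obtain c z where "x = rdiv A z c" "c \<in> subgroupoid_gen A B" "z \<in> Dl A B p" by blast
      then show thesis using that[of False c z] by simp
    qed
    have "dsz A B z \<le> p" unfolding dsz_def using st(3) by (rule Least_le)
    then have lt: "dsz A B z < dsz A B x" using Suc n_def by linarith
    have zD: "z \<in> D2 A B" unfolding D2_def using st(3) by blast
    show ?thesis
      apply (rule disjI2)
      apply (rule exI[of _ c], rule exI[of _ z], rule exI[of _ k])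
      by (intro conjI st(2) zD lt st(1))
  qed
qed

lemma D2_base: "B \<subseteq> D2 A B"
proof
  fix x assume "x \<in> B" then have "x \<in> Dl A B 0" by simp
  then show "x \<in> D2 A B" unfolding D2_def by blast
qed

lemma D2_ldiv: assumes "c \<in> subgroupoid_gen A B" "z \<in> D2 A B" shows "ldiv A c z \<in> D2 A B"
proof -
  obtain n where "z \<in> Dl A B n" using assms(2) unfolding D2_def by blast
  then have "ldiv A c z \<in> Dl A B (Suc n)" using assms(1) by auto
  then show ?thesis unfolding D2_def by blast
qed

lemma D2_rdiv: assumes "c \<in> subgroupoid_gen A B" "z \<in> D2 A B" shows "rdiv A z c \<in> D2 A B"
proof -
  obtain n where "z \<in> Dl A B n" using assms(2) unfolding D2_def by blast
  then have "rdiv A z c \<in> Dl A B (Suc n)" using assms(1) by auto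
  then show ?thesis unfolding D2_def by blast
qed



locale irl =
  fixes A :: "('a, 'b) rlu_groupoid_scheme" and B :: "'a set"
  assumes rlu: "is_rlu_groupoid A" and integ: "is_integral A" and finB: "finite B"
begin

abbreviation "G \<equiv> subgroupoid_gen A B"

lemma lat: "is_lattice A" using rlu unfolding is_rlu_groupoid_def by blast

lemma le_refl: "leq A x x"
  using lat unfolding is_lattice_def leq_def by blast

lemma le_antisym: "leq A x y \<Longrightarrow> leq A y x \<Longrightarrow> x = y"
  using lat unfolding is_lattice_def leq_def by metis

lemma le_trans: "leq A x y \<Longrightarrow> leq A y z \<Longrightarrow> leq A x z"
  using lat unfolding is_lattice_def leq_def by metis

lemma resl: "leq A (mult A x y) z \<longleftrightarrow> leq A y (ldiv A x z)"
  using rlu unfolding is_rlu_groupoid_def by blast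

lemma resr: "leq A (mult A x y) z \<longleftrightarrow> leq A x (rdiv A z y)"
  using rlu unfolding is_rlu_groupoid_def by blast

lemma unitl: "mult A (one A) x = x" and unitr: "mult A x (one A) = x"
  using rlu unfolding is_rlu_groupoid_def by auto

lemma mono_r: "leq A x y \<Longrightarrow> leq A (mult A z x) (mult A z y)"
  by (meson le_refl le_trans resl)

lemma mono_l: "leq A x y \<Longrightarrow> leq A (mult A x z) (mult A y z)"
  by (meson le_refl le_trans resr)

lemma mono2: "leq A x y \<Longrightarrow> leq A x' y' \<Longrightarrow> leq A (mult A x x') (mult A y y')"
  by (meson le_trans mono_l mono_r)

lemma le_one: "leq A x (one A)" using integ unfolding is_integral_def by blast

lemma prod_le_l: "leq A (mult A x y) x"
  using mono_r[of y "one A" x, OF le_one] unitr by simp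

lemma prod_le_r: "leq A (mult A x y) y"
  using mono_l[of x "one A" y, OF le_one] unitl by simp

lemma ldiv_anti: "leq A c' c \<Longrightarrow> leq A (ldiv A c z) (ldiv A c' z)"
  by (meson le_refl le_trans mono_l resl)

lemma ldiv_mono: "leq A z z' \<Longrightarrow> leq A (ldiv A c z) (ldiv A c z')"
  by (meson le_refl le_trans resl)

lemma rdiv_anti: "leq A c' c \<Longrightarrow> leq A (rdiv A z c) (rdiv A z c')"
  by (meson le_refl le_trans mono_r resr)

lemma rdiv_mono: "leq A z z' \<Longrightarrow> leq A (rdiv A z c) (rdiv A z' c)"
  by (meson le_refl le_trans resr)

lemma ldiv_infl: "leq A z (ldiv A c z)"
  using resl prod_le_r by blast

lemma rdiv_infl: "leq A z (rdiv A z c)"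
  using resr prod_le_l by blast

lemma W1:
  assumes fG: "\<forall>i. f i \<in> G"
  shows "good (\<lambda>a b. leq A b a) f"
proof (rule ccontr)
  let ?Q = "\<lambda>a b. leq A b a"
  assume nb: "\<not> good ?Q f"
  obtain m where mG: "\<forall>i. m i \<in> G" and mbad: "\<not> good ?Q m"
    and mmin: "\<forall>n g. (\<forall>i. g i \<in> G) \<and> (\<forall>i<n. g i = m i) \<and> gsz A B (g n) < gsz A B (m n) \<longrightarrow> good ?Q g"
    using mbs[OF fG nb, of "gsz A B"] by blast
  have "inj m" using bad_inj[OF mbad] le_refl by blast
  then obtain N where N: "\<forall>n\<ge>N. m n \<notin> insert (one A) B" using fin_base finB by blast
  have "\<forall>n. \<exists>p. N \<le> n \<longrightarrow> m n = mult A (fst p) (snd p) \<and> fst p \<in> G \<and> snd p \<in> G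
      \<and> gsz A B (fst p) < gsz A B (m n) \<and> gsz A B (snd p) < gsz A B (m n)"
  proof
    fix n
    show "\<exists>p. N \<le> n \<longrightarrow> m n = mult A (fst p) (snd p) \<and> fst p \<in> G \<and> snd p \<in> G
      \<and> gsz A B (fst p) < gsz A B (m n) \<and> gsz A B (snd p) < gsz A B (m n)"
    proof (cases "N \<le> n")
      case True
      then obtain s t where st: "m n = mult A s t \<and> s \<in> G \<and> t \<in> G \<and> gsz A B s < gsz A B (m n) \<and> gsz A B t < gsz A B (m n)"
        using G_decomp[of "m n" A B] mG N by blast
      show ?thesis apply (rule exI[of _ "(s, t)"]) unfolding fst_conv snd_conv using st by blast
    qed simp
  qed
  then obtain p where p: "\<forall>n. N \<le> n \<longrightarrow> m n = mult A (fst (p n)) (snd (p n)) \<and> fst (p n) \<in> G \<and> snd (p n) \<in> G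
      \<and> gsz A B (fst (p n)) < gsz A B (m n) \<and> gsz A B (snd (p n)) < gsz A B (m n)"
    by (rule choice_iff[THEN iffD1, elim_format]) blast
  define s where "s n = fst (p n)" for n
  define t where "t n = snd (p n)" for n
  have ws: "wqs ?Q (\<lambda>n. s (N + n))"
  proof (rule mbs_sub[OF mG mbad mmin])
    show "\<forall>n\<ge>N. s n \<in> G \<and> gsz A B (s n) < gsz A B (m n) \<and> (\<forall>x\<in>G. ?Q x (s n) \<longrightarrow> ?Q x (m n))"
    proof (intro allI impI conjI ballI)
      fix n x assume n: "N \<le> n"
      show "s n \<in> G" "gsz A B (s n) < gsz A B (m n)" using p n unfolding s_def by blast+
      assume "leq A (s n) x"
      moreover have "m n = mult A (s n) (t n)" using p n unfolding s_def t_def by blast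
      then have "leq A (m n) (s n)" using prod_le_l by simp
      ultimately show "leq A (m n) x" using le_trans by blast
    qed
  qed
  have wt: "wqs ?Q (\<lambda>n. t (N + n))"
  proof (rule mbs_sub[OF mG mbad mmin])
    show "\<forall>n\<ge>N. t n \<in> G \<and> gsz A B (t n) < gsz A B (m n) \<and> (\<forall>x\<in>G. ?Q x (t n) \<longrightarrow> ?Q x (m n))"
    proof (intro allI impI conjI ballI)
      fix n x assume n: "N \<le> n"
      show "t n \<in> G" "gsz A B (t n) < gsz A B (m n)" using p n unfolding t_def by blast+
      assume "leq A (t n) x"
      moreover have "m n = mult A (s n) (t n)" using p n unfolding s_def t_def by blast
      then have "leq A (m n) (t n)" using prod_le_r by simp
      ultimately show "leq A (m n) x" using le_trans by blast
    qed
  qed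
  obtain \<phi> :: "nat \<Rightarrow> nat" where sm: "strict_mono \<phi>" and as: "\<forall>i j. i < j \<longrightarrow> ?Q (s (N + \<phi> i)) (s (N + \<phi> j))"
    using asc[OF ws] by blast
  have "good ?Q ((\<lambda>n. t (N + n)) \<circ> \<phi>)" using wt sm unfolding wqs_def by blast
  then obtain i j where ij: "i < j" "?Q (t (N + \<phi> i)) (t (N + \<phi> j))" unfolding good_def by auto
  have "?Q (m (N + \<phi> i)) (m (N + \<phi> j))"
    using p mono2[OF as[rule_format, OF ij(1)] ij(2)] unfolding s_def t_def by simp
  moreover have "N + \<phi> i < N + \<phi> j" using sm ij(1) by (simp add: strict_mono_def)
  ultimately show False using mbad unfolding good_def by blast
qed

lemma W2:
  assumes fD: "\<forall>i. f i \<in> D2 A B"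
  shows "good (leq A) f"
proof (rule ccontr)
  let ?Q = "leq A"
  assume nb: "\<not> good ?Q f"
  obtain m where mD: "\<forall>i. m i \<in> D2 A B" and mbad: "\<not> good ?Q m"
    and mmin: "\<forall>n g. (\<forall>i. g i \<in> D2 A B) \<and> (\<forall>i<n. g i = m i) \<and> dsz A B (g n) < dsz A B (m n) \<longrightarrow> good ?Q g"
    using mbs[OF fD nb, of "dsz A B"] by blast
  have "inj m" using bad_inj[OF mbad] le_refl by blast
  then obtain N where N: "\<forall>n\<ge>N. m n \<notin> B" using fin_base finB by blast
  have "\<forall>n. \<exists>p. N \<le> n \<longrightarrow> fst p \<in> G \<and> fst (snd p) \<in> D2 A B \<and> dsz A B (fst (snd p)) < dsz A B (m n)
      \<and> m n = (if snd (snd p) then ldiv A (fst p) (fst (snd p)) else rdiv A (fst (snd p)) (fst p))"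
  proof
    fix n
    show "\<exists>p. N \<le> n \<longrightarrow> fst p \<in> G \<and> fst (snd p) \<in> D2 A B \<and> dsz A B (fst (snd p)) < dsz A B (m n)
      \<and> m n = (if snd (snd p) then ldiv A (fst p) (fst (snd p)) else rdiv A (fst (snd p)) (fst p))"
    proof (cases "N \<le> n")
      case True
      then obtain c z k where st: "c \<in> G \<and> z \<in> D2 A B \<and> dsz A B z < dsz A B (m n)
            \<and> m n = (if k then ldiv A c z else rdiv A z c)"
        using D_decomp[of "m n" A B] mD N by blast
      show ?thesis apply (rule exI[of _ "(c, z, k)"]) unfolding fst_conv snd_conv by (intro impI) (rule st)
    qed simp
  qed
  then obtain p where p: "\<forall>n. N \<le> n \<longrightarrow> fst (p n) \<in> G \<and> fst (snd (p n)) \<in> D2 A B \<and> dsz A B (fst (snd (p n))) < dsz A B (m n)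
      \<and> m n = (if snd (snd (p n)) then ldiv A (fst (p n)) (fst (snd (p n))) else rdiv A (fst (snd (p n))) (fst (p n)))"
    by (rule choice_iff[THEN iffD1, elim_format]) blast
  define c where "c n = fst (p n)" for n
  define z where "z n = fst (snd (p n))" for n
  define k where "k n = snd (snd (p n))" for n
  have pn: "c n \<in> G" "z n \<in> D2 A B" "dsz A B (z n) < dsz A B (m n)"
     "m n = (if k n then ldiv A (c n) (z n) else rdiv A (z n) (c n))" if "N \<le> n" for n
    using p that unfolding c_def z_def k_def by blast+
  have wz: "wqs ?Q (\<lambda>n. z (N + n))"
  proof (rule mbs_sub[OF mD mbad mmin])
    show "\<forall>n\<ge>N. z n \<in> D2 A B \<and> dsz A B (z n) < dsz A B (m n) \<and> (\<forall>x\<in>D2 A B. ?Q x (z n) \<longrightarrow> ?Q x (m n))"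
    proof (intro allI impI conjI ballI)
      fix n x assume n: "N \<le> n"
      show "z n \<in> D2 A B" "dsz A B (z n) < dsz A B (m n)" using pn n by blast+
      assume "leq A x (z n)"
      moreover have "leq A (z n) (m n)" using pn(4)[OF n] ldiv_infl rdiv_infl by simp
      ultimately show "leq A x (m n)" using le_trans by blast
    qed
  qed
  obtain \<phi> :: "nat \<Rightarrow> nat" and v where sm1: "strict_mono \<phi>" and kv: "\<forall>i. k (N + \<phi> i) = v"
    using pigeon_bool[of "\<lambda>i. k (N + i)"] by blast
  have "wqs ?Q ((\<lambda>n. z (N + n)) \<circ> \<phi>)" using wqs_comp[OF wz sm1] .
  from asc[OF this] obtain \<psi> :: "nat \<Rightarrow> nat" where sm2: "strict_mono \<psi>"
    and as: "\<forall>i j. i < j \<longrightarrow> ?Q (z (N + \<phi> (\<psi> i))) (z (N + \<phi> (\<psi> j)))" by auto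
  define idx where "idx i = N + \<phi> (\<psi> i)" for i
  have idxN: "N \<le> idx i" for i unfolding idx_def by simp
  have "\<forall>i. c (idx i) \<in> G" using pn(1) idxN by blast
  then have "good (\<lambda>a b. leq A b a) (\<lambda>i. c (idx i))" by (rule W1)
  then obtain i j where ij: "i < j" "leq A (c (idx j)) (c (idx i))" unfolding good_def by auto
  have zz: "leq A (z (idx i)) (z (idx j))" using as ij(1) unfolding idx_def by blast
  have kk: "k (idx i) = v" "k (idx j) = v" using kv unfolding idx_def by auto
  have "leq A (m (idx i)) (m (idx j))"
  proof (cases v)
    case True
    then show ?thesis using pn(4)[OF idxN[of i]] pn(4)[OF idxN[of j]] kk
      le_trans[OF ldiv_anti[OF ij(2)] ldiv_mono[OF zz]] by simp
  next
    case False
    then show ?thesis using pn(4)[OF idxN[of i]] pn(4)[OF idxN[of j]] kk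
      le_trans[OF rdiv_anti[OF ij(2)] rdiv_mono[OF zz]] by simp
  qed
  moreover have "idx i < idx j" using sm1 sm2 ij(1) unfolding idx_def by (simp add: strict_mono_def)
  ultimately show False using mbad unfolding good_def by blast
qed

lemma const_term:
  "var_count \<tau> = 0 \<Longrightarrow> consts_of \<tau> \<subseteq> G \<Longrightarrow> geval A \<tau> x = geval A \<tau> y \<and> geval A \<tau> x \<in> G"
proof (induction \<tau>)
  case Var then show ?case by simp
next
  case (Const c) then show ?case by simp
next
  case (Mul s t)
  then have "geval A s x = geval A s y \<and> geval A s x \<in> G" "geval A t x = geval A t y \<and> geval A t x \<in> G"
    by auto
  moreover have "mult A (geval A s x) (geval A t x) \<in> G"
    using calculation subgroupoid_gen.gen_mult[of "geval A s x" A B "geval A t x"] by blast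
  ultimately show ?case by simp
qed

lemma lin:
  "var_count \<tau> = 1 \<Longrightarrow> consts_of \<tau> \<subseteq> G \<Longrightarrow> b \<in> D2 A B \<Longrightarrow>
    \<exists>a\<in>D2 A B. \<forall>x\<in>G. leq A (geval A \<tau> x) b \<longleftrightarrow> leq A x a"
proof (induction \<tau> arbitrary: b)
  case Var then show ?case by auto
next
  case (Const c) then show ?case by simp
next
  case (Mul s t)
  have cs: "consts_of s \<subseteq> G" "consts_of t \<subseteq> G" using Mul.prems(2) by auto
  have "var_count s = 1 \<and> var_count t = 0 \<or> var_count s = 0 \<and> var_count t = 1"
    using Mul.prems(1) by auto
  then show ?case
  proof
    assume v: "var_count s = 1 \<and> var_count t = 0"
    define c where "c = geval A t (one A)"
    have ct: "\<forall>x. geval A t x = c" "c \<in> G" using const_term[of t] v cs unfolding c_def by blast+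
    have "rdiv A b c \<in> D2 A B" using D2_rdiv[OF ct(2) Mul.prems(3)] .
    then obtain a where a: "a \<in> D2 A B" "\<forall>x\<in>G. leq A (geval A s x) (rdiv A b c) \<longleftrightarrow> leq A x a"
      using Mul.IH(1) v cs by blast
    have "\<forall>x\<in>G. leq A (geval A (Mul s t) x) b \<longleftrightarrow> leq A x a" using a(2) ct(1) resr by simp
    then show ?thesis using a(1) by blast
  next
    assume v: "var_count s = 0 \<and> var_count t = 1"
    define c where "c = geval A s (one A)"
    have ct: "\<forall>x. geval A s x = c" "c \<in> G" using const_term[of s] v cs unfolding c_def by blast+
    have "ldiv A c b \<in> D2 A B" using D2_ldiv[OF ct(2) Mul.prems(3)] .
    then obtain a where a: "a \<in> D2 A B" "\<forall>x\<in>G. leq A (geval A t x) (ldiv A c b) \<longleftrightarrow> leq A x a"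
      using Mul.IH(2) v cs by blast
    have "\<forall>x\<in>G. leq A (geval A (Mul s t) x) b \<longleftrightarrow> leq A x a" using a(2) ct(1) resl by simp
    then show ?thesis using a(1) by blast
  qed
qed

definition Fam where "Fam = {{x \<in> G. leq A x a} | a. a \<in> D2 A B}"

lemma Fam_finite: "finite Fam"
proof (rule ccontr)
  assume inf: "infinite Fam"
  have "\<exists>f::nat \<Rightarrow> 'a set. inj f \<and> range f \<subseteq> Fam"
    using iffD1[OF infinite_iff_countable_subset inf] .
  then obtain e :: "nat \<Rightarrow> 'a set" where e: "inj e" "range e \<subseteq> Fam" by (elim exE conjE)
  have "\<forall>n. \<exists>a. a \<in> D2 A B \<and> e n = {x \<in> G. leq A x a}" using e(2) unfolding Fam_def by blast
  then obtain a where a: "\<forall>n. a n \<in> D2 A B \<and> e n = {x \<in> G. leq A x (a n)}"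
    by (rule choice_iff[THEN iffD1, elim_format]) blast
  have "wqs (leq A) a" unfolding wqs_def
  proof (intro allI impI)
    fix \<phi> :: "nat \<Rightarrow> nat"
    have "\<forall>i. (a \<circ> \<phi>) i \<in> D2 A B" using a by simp
    then show "good (leq A) (a \<circ> \<phi>)" by (rule W2)
  qed
  from asc[OF this] obtain \<phi> :: "nat \<Rightarrow> nat" where sm: "strict_mono \<phi>"
    and as: "\<forall>i j. i < j \<longrightarrow> leq A (a (\<phi> i)) (a (\<phi> j))" by blast
  define L where "L i = e (\<phi> i)" for i
  have aD: "a n \<in> D2 A B" for n using a by blast
  have eL: "e n = {x \<in> G. leq A x (a n)}" for n using a by blast
  have memL: "y \<in> L i \<longleftrightarrow> y \<in> G \<and> leq A y (a (\<phi> i))" for y i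
    unfolding L_def eL by simp
  have Lsub: "L i \<subseteq> L j" if "i \<le> j" for i j
  proof (cases "i = j")
    case False
    then have "i < j" using that by simp
    then have aa: "leq A (a (\<phi> i)) (a (\<phi> j))" using as by blast
    show ?thesis
    proof
      fix y assume "y \<in> L i"
      then show "y \<in> L j" using memL aa le_trans by blast
    qed
  qed simp
  have Lne: "L i \<noteq> L (Suc i)" for i
  proof
    assume "L i = L (Suc i)"
    then have "\<phi> i = \<phi> (Suc i)" using e(1) unfolding L_def inj_def by blast
    then show False using sm unfolding strict_mono_def by (metis lessI less_irrefl)
  qed
  have "\<exists>y. y \<in> L (Suc i) \<and> y \<notin> L i" for i
  proof (rule ccontr)
    assume "\<not> ?thesis"
    then have "L (Suc i) \<subseteq> L i" by blast
    moreover have "L i \<subseteq> L (Suc i)" using Lsub by simp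
    ultimately show False using Lne[of i] by blast
  qed
  then have "\<forall>i. \<exists>y. y \<in> L (Suc i) \<and> y \<notin> L i" by blast
  then obtain x where x: "\<forall>i. x i \<in> L (Suc i) \<and> x i \<notin> L i"
    by (rule choice_iff[THEN iffD1, elim_format]) blast
  have xG: "\<forall>i. x i \<in> G" using x memL by blast
  from W1[OF xG] obtain i j where ij: "i < j" "leq A (x j) (x i)" unfolding good_def by blast
  have "Suc i \<le> j" using ij(1) by simp
  then have "x i \<in> L j" using x Lsub[of "Suc i" j] by blast
  then have "leq A (x i) (a (\<phi> j))" using memL by blast
  then have "leq A (x j) (a (\<phi> j))" using ij(2) le_trans by blast
  then have "x j \<in> L j" using xG memL by blast
  then show False using x by blast
qed

lemma closed_repr:
  assumes "X \<in> ca_carrier (Fplus (frame_AB A B))"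
  shows "X \<in> (\<lambda>S. G \<inter> \<Inter>S) ` Pow Fam"
proof -
  let ?F = "frame_AB A B"
  have XG: "X \<subseteq> G" and cl: "gammaN ?F X = X" using assms by (auto simp: Fplus_def frame_AB_def)
  define S where "S = (\<lambda>t. {g \<in> G. fN ?F g t}) ` rpolar ?F X"
  have "X = G \<inter> \<Inter>S"
  proof -
    have "gammaN ?F X = {g \<in> G. \<forall>t\<in>rpolar ?F X. fN ?F g t}"
      unfolding gammaN_def lpolar_def by (simp add: frame_AB_def)
    also have "\<dots> = G \<inter> \<Inter>S" unfolding S_def by auto
    finally show ?thesis using cl by simp
  qed
  moreover have "S \<subseteq> Fam"
  proof
    fix Z assume "Z \<in> S"
    then obtain t where t: "t \<in> fT ?F" "Z = {g \<in> G. fN ?F g t}"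
      unfolding S_def rpolar_def by blast
    have tT: "t \<in> lin_polys A G \<times> B" using t(1) by (simp add: frame_AB_def)
    obtain u b where ub: "t = (u, b)" "u \<in> lin_polys A G" "b \<in> B"
      using tT by (cases t) simp
    have "\<exists>\<tau>. u = (\<lambda>x. if x \<in> G then geval A \<tau> x else undefined) \<and>
      var_count \<tau> = 1 \<and> consts_of \<tau> \<subseteq> G"
      using ub(2) unfolding lin_polys_def mem_Collect_eq by simp
    then obtain \<tau> where \<tau>: "u = (\<lambda>x. if x \<in> G then geval A \<tau> x else undefined)"
      "var_count \<tau> = 1" "consts_of \<tau> \<subseteq> G" by (elim exE conjE)
    have "b \<in> D2 A B" using ub(3) D2_base[of B A] by (rule subsetD[rotated])
    from lin[OF \<tau>(2,3) this] obtain a where a: "a \<in> D2 A B"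
      "\<forall>x\<in>G. leq A (geval A \<tau> x) b \<longleftrightarrow> leq A x a" by (rule bexE)
    have fn: "fN ?F g t \<longleftrightarrow> leq A (geval A \<tau> g) b" if "g \<in> G" for g
      using that ub(1) \<tau>(1) by (simp add: frame_AB_def)
    have "Z = {x \<in> G. leq A x a}"
    proof (rule set_eqI)
      fix g show "g \<in> Z \<longleftrightarrow> g \<in> {x \<in> G. leq A x a}"
        using t(2) fn a(2) by (cases "g \<in> G") auto
    qed
    then show "Z \<in> Fam" unfolding Fam_def using a(1) by blast
  qed
  ultimately show ?thesis by (intro image_eqI[of _ _ S]) auto
qed

lemma main_fin: "finite (ca_carrier (Fplus (frame_AB A B)))"
proof (rule finite_subset)
  show "ca_carrier (Fplus (frame_AB A B)) \<subseteq> (\<lambda>S. G \<inter> \<Inter>S) ` Pow Fam"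
    using closed_repr by blast
  show "finite ((\<lambda>S. G \<inter> \<Inter>S) ` Pow Fam)" using Fam_finite by simp
qed

end

theorem mainTheorem6:
  fixes A :: "('a, 'b) rlu_groupoid_scheme" and B :: "'a set"
  assumes "is_interior_rlu_groupoid A"
    and "is_integral A"
    and "is_partial_subalgebra A B"
    and "finite B"
  shows "finite (ca_carrier (Fplus (frame_AB A B)))"
proof -
  interpret irl A B
    using assms unfolding is_interior_rlu_groupoid_def by unfold_locales auto
  show ?thesis by (rule main_fin)
qed

end
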